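(* Consider an isotropic shift-invariant vector Volterra lattice on the sphere \[ V_{n,x}=f_nV_{n+1}+g_nV_n+h_nV_{n-1},\qquad n\in\mathbb Z, \] with $f,g,h$ scalar functions of $v_{1,0},v_{0,-1},v_{1,-1}$, $f,h\neq0$, satisfying the first integrability conditions \[ D_x(\log f)\in\operatorname{Im}(T-1),\qquad D_x(\log h)\in\operatorname{Im}(T-1). \] Then the dependence of $f,h$ on $v_{1,-1}$ is one of the following: Case 1: there are functions $a$ of one variable and $b$ of two variables such that \[ f=\frac{a(v_{0,-1})}{v_{1,-1}+b(v_{1,0},v_{0,-1})},\qquad h=-\frac{a(v_{1,0})}{v_{1,-1}+b(v_{1,0},v_{0,-1})}; \] Case 2: $f=f(v_{1,0},v_{0,-1})$ and $h=h(v_{1,0},v_{0,-1})$ do not depend on $v_{1,-1}$.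
   Context: Vectors $V_n$ lie in a space with symmetric scalar product, $v_{m,n}=\langle V_m,V_n\rangle=v_{n,m}$, $v_{n,n}=1$; the $v_{m,n}$, $m>n$, are treated as independent variables (the lattice must work for any dimension and scalar product), and $v_{1,0}f+g+v_{0,-1}h=0$. $T$ is the shift $n\mapsto n+1$, $T(a(v_{m,n}))=a(v_{m+1,n+1})$, $f_n=T^n(f)$. $D_x$ is the total $x$-derivative along the lattice, $D_x(v_{m,n})=\langle V_{m,x},V_n\rangle+\langle V_m,V_{n,x}\rangle$. $\operatorname{Im}(T-1)$ denotes the set of expressions $(T-1)(\sigma)$ with $\sigma$ a function of finitely many $v_{m,n}$. *)

theory Defs
  imports "HOL-Analysis.Analysis"
begin

text \<open>An assignment of values to the scalar products: u (m,n) is the value of v_{m,n}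
  (only pairs with m > n are meaningful; the v_{m,n}, m > n, are independent variables).\<close>
type_synonym assignment = "int \<times> int \<Rightarrow> real"

definition sp :: "assignment \<Rightarrow> int \<Rightarrow> int \<Rightarrow> real" where
  "sp u i j = (if i = j then 1 else if j < i then u (i, j) else u (j, i))"

text \<open>f_n = T^n f, where f is a function of (v_{1,0}, v_{0,-1}, v_{1,-1}).\<close>
definition shiftf :: "(real \<Rightarrow> real \<Rightarrow> real \<Rightarrow> real) \<Rightarrow> int \<Rightarrow> assignment \<Rightarrow> real" where
  "shiftf f n u = f (u (n + 1, n)) (u (n, n - 1)) (u (n + 1, n - 1))"

text \<open>g is determined by v_{1,0} f + g + v_{0,-1} h = 0.\<close>
definition gfun :: "(real \<Rightarrow> real \<Rightarrow> real \<Rightarrow> real) \<Rightarrow> (real \<Rightarrow> real \<Rightarrow> real \<Rightarrow> real)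
    \<Rightarrow> int \<Rightarrow> assignment \<Rightarrow> real" where
  "gfun f h n u = - (u (n + 1, n) * shiftf f n u + u (n, n - 1) * shiftf h n u)"

text \<open>D_x(v_{m,n}) = <V_{m,x},V_n> + <V_m,V_{n,x}> along the lattice
  V_{n,x} = f_n V_{n+1} + g_n V_n + h_n V_{n-1}.\<close>
definition Dv :: "(real \<Rightarrow> real \<Rightarrow> real \<Rightarrow> real) \<Rightarrow> (real \<Rightarrow> real \<Rightarrow> real \<Rightarrow> real)
    \<Rightarrow> int \<times> int \<Rightarrow> assignment \<Rightarrow> real" where
  "Dv f h p u = (case p of (m, n) \<Rightarrow>
       shiftf f m u * sp u (m + 1) n + gfun f h m u * sp u m n + shiftf h m u * sp u (m - 1) n
     + shiftf f n u * sp u m (n + 1) + gfun f h n u * sp u m n + shiftf h n u * sp u m (n - 1))"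

definition depends_only_on :: "(assignment \<Rightarrow> real) \<Rightarrow> (int \<times> int) set \<Rightarrow> bool" where
  "depends_only_on \<sigma> S \<longleftrightarrow> (\<forall>u u'. (\<forall>p\<in>S. u p = u' p) \<longrightarrow> \<sigma> u = \<sigma> u')"

definition Dx :: "(real \<Rightarrow> real \<Rightarrow> real \<Rightarrow> real) \<Rightarrow> (real \<Rightarrow> real \<Rightarrow> real \<Rightarrow> real)
    \<Rightarrow> (int \<times> int) set \<Rightarrow> (assignment \<Rightarrow> real) \<Rightarrow> assignment \<Rightarrow> real" where
  "Dx f h S \<sigma> u = (\<Sum>p\<in>S. deriv (\<lambda>t. \<sigma> (u(p := t))) (u p) * Dv f h p u)"

definition Tshift :: "(assignment \<Rightarrow> real) \<Rightarrow> assignment \<Rightarrow> real" where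
  "Tshift \<sigma> u = \<sigma> (\<lambda>(m, n). u (m + 1, n + 1))"

text \<open>Domain of the variables: all f_n, h_n are evaluated inside A \<times> A \<times> B.\<close>
definition Omega :: "real set \<Rightarrow> real set \<Rightarrow> assignment set" where
  "Omega A B = {u. \<forall>n. u (n + 1, n) \<in> A \<and> u (n + 1, n - 1) \<in> B}"

definition S0 :: "(int \<times> int) set" where
  "S0 = {(1, 0), (0, -1), (1, -1)}"

text \<open>D_x(log q_0) \<in> Im(T-1) on the domain, where q_0 = q(v_{1,0},v_{0,-1},v_{1,-1})
  and D_x(log q_0) = D_x(q_0)/q_0.\<close>
definition log_deriv_in_Im :: "(real \<Rightarrow> real \<Rightarrow> real \<Rightarrow> real) \<Rightarrow> (real \<Rightarrow> real \<Rightarrow> real \<Rightarrow> real)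
    \<Rightarrow> real set \<Rightarrow> real set \<Rightarrow> (real \<Rightarrow> real \<Rightarrow> real \<Rightarrow> real) \<Rightarrow> bool" where
  "log_deriv_in_Im f h A B q \<longleftrightarrow>
     (\<exists>\<sigma> S. finite S \<and> S \<subseteq> {(m, n). n < m} \<and> depends_only_on \<sigma> S \<and>
        (\<forall>u\<in>Omega A B. Dx f h S0 (shiftf q 0) u / shiftf q 0 u = Tshift \<sigma> u - \<sigma> u))"

end

theory Submission
  imports Defs "HOL-Analysis.Analysis"
begin


lemma Dx_S0: "Dx f h S0 s u =
   deriv (\<lambda>t. s (u((1,0):=t))) (u (1,0)) * Dv f h (1,0) u
 + deriv (\<lambda>t. s (u((0,-1):=t))) (u (0,-1)) * Dv f h (0,-1) u
 + deriv (\<lambda>t. s (u((1,-1):=t))) (u (1,-1)) * Dv f h (1,-1) u"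
  unfolding Dx_def S0_def by simp

lemma Dx_upd21: "Dx f h S0 (shiftf q 0) (u((2,-1):=t)) = Dx f h S0 (shiftf q 0) u
   + deriv (\<lambda>s. q (u(1,0)) (u(0,-1)) s) (u(1,-1)) * f (u(2,1)) (u(1,0)) (u(2,0)) * (t - u(2,-1))"
  unfolding Dx_S0 by (simp add: Dv_def shiftf_def gfun_def sp_def algebra_simps)

lemma Dx_upd12: "Dx f h S0 (shiftf q 0) (u((1,-2):=t)) = Dx f h S0 (shiftf q 0) u
   + deriv (\<lambda>s. q (u(1,0)) (u(0,-1)) s) (u(1,-1)) * h (u(0,-1)) (u(-1,-2)) (u(0,-2)) * (t - u(1,-2))"
  unfolding Dx_S0 by (simp add: Dv_def shiftf_def gfun_def sp_def algebra_simps)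

definition Qset :: "(int \<times> int) set" where
 "Qset = {(1,0),(0,-1),(1,-1),(2,1),(2,0),(-1,-2),(0,-2),(2,-1),(1,-2)}"

lemma Dx_local: assumes "\<forall>p\<in>Qset. u p = u' p"
  shows "Dx f h S0 (shiftf q 0) u = Dx f h S0 (shiftf q 0) u'"
proof -
  have e: "u (1,0) = u' (1,0)" "u (0,-1) = u' (0,-1)" "u (1,-1) = u' (1,-1)" "u (2,1) = u' (2,1)"
    "u (2,0) = u' (2,0)" "u (-1,-2) = u' (-1,-2)" "u (0,-2) = u' (0,-2)" "u (2,-1) = u' (2,-1)"
    "u (1,-2) = u' (1,-2)" using assms by (auto simp: Qset_def)
  show ?thesis unfolding Dx_S0 by (simp add: Dv_def shiftf_def gfun_def sp_def e)
qed


definition shift :: "int \<Rightarrow> assignment \<Rightarrow> assignment" where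
  "shift k u = (\<lambda>p. u (fst p + k, snd p + k))"

lemma Tshift_shift: "Tshift \<sigma> u = \<sigma> (shift 1 u)"
  unfolding Tshift_def shift_def by (rule arg_cong[where f=\<sigma>]) (auto simp: fun_eq_iff)

lemma shift_shift: "shift 1 (shift k u) = shift (k+1) u"
  unfolding shift_def by (auto simp: fun_eq_iff algebra_simps)

lemma shift0: "shift 0 u = u" unfolding shift_def by auto

lemma Omega_shift: "u \<in> Omega A B \<Longrightarrow> shift k u \<in> Omega A B"
  unfolding Omega_def shift_def
proof (clarsimp)
  fix n assume H: "\<forall>n. u (n + 1, n) \<in> A \<and> u (n + 1, n - 1) \<in> B"
  show "u (n + 1 + k, n + k) \<in> A \<and> u (n + 1 + k, n - 1 + k) \<in> B"
    using H[rule_format, of "n+k"] by (simp add: algebra_simps)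
qed

lemma Omega_upd: "u \<in> Omega A B \<Longrightarrow> u((2,-1):=t) \<in> Omega A B"
  unfolding Omega_def by auto

lemma key_rel:
  assumes hyp: "log_deriv_in_Im f h A B q" and w: "w \<in> Omega A B"
  shows "deriv (\<lambda>s. q (w(1,0)) (w(0,-1)) s) (w(1,-1)) * f (w(2,1)) (w(1,0)) (w(2,0)) / q (w(1,0)) (w(0,-1)) (w(1,-1))
    + deriv (\<lambda>s. q (w(2,1)) (w(1,0)) s) (w(2,0)) * h (w(1,0)) (w(0,-1)) (w(1,-1)) / q (w(2,1)) (w(1,0)) (w(2,0)) = 0"
proof -
  obtain \<sigma> S where fS: "finite S" and dep: "depends_only_on \<sigma> S"
    and eq: "\<And>u. u\<in>Omega A B \<Longrightarrow> Dx f h S0 (shiftf q 0) u / shiftf q 0 u = Tshift \<sigma> u - \<sigma> u"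
    using hyp unfolding log_deriv_in_Im_def by blast
  define L where "L u = Dx f h S0 (shiftf q 0) u / shiftf q 0 u" for u
  define w' where "w' = w((2,-1) := w(2,-1) + 1)"
  have w': "w' \<in> Omega A B" using w Omega_upd unfolding w'_def by blast
  have Lsh: "L (shift k v) = \<sigma> (shift (k+1) v) - \<sigma> (shift k v)" if "v \<in> Omega A B" for v k
    using eq[OF Omega_shift[OF that, of k]] unfolding L_def Tshift_shift shift_shift by simp
  define \<Delta> where "\<Delta> k = \<sigma> (shift k w') - \<sigma> (shift k w)" for k
  have step: "\<Delta> (k+1) - \<Delta> k = L (shift k w') - L (shift k w)" for k
    unfolding \<Delta>_def Lsh[OF w] Lsh[OF w'] by simp
  have loc: "L (shift k w') = L (shift k w)" if "k \<noteq> 0" "k \<noteq> 1" for k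
  proof -
    have "\<forall>p\<in>Qset. shift k w' p = shift k w p"
      using that unfolding Qset_def shift_def w'_def by auto
    then show ?thesis unfolding L_def
      using Dx_local[of "shift k w'" "shift k w"] by (simp add: Qset_def shiftf_def)
  qed
  have dn: "\<Delta> (- int n) = \<Delta> 0" for n
  proof (induction n)
    case (Suc n)
    have "\<Delta> (- int (Suc n) + 1) = \<Delta> (- int (Suc n))"
      using step[of "- int (Suc n)"] loc[of "- int (Suc n)"] by simp
    then show ?case using Suc by simp
  qed simp
  have up: "\<Delta> (2 + int n) = \<Delta> 2" for n
  proof (induction n)
    case (Suc n)
    have "\<Delta> (2 + int n + 1) = \<Delta> (2 + int n)"
      using step[of "2 + int n"] loc[of "2 + int n"] by simp
    then show ?case using Suc by (simp add: algebra_simps)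
  qed simp
  define M where "M = (\<Sum>p\<in>S. \<bar>fst p\<bar>)"
  have Mb: "\<bar>fst p\<bar> \<le> M" if "p \<in> S" for p
    unfolding M_def using member_le_sum[OF _ _ fS, of p "\<lambda>p. \<bar>fst p\<bar>"] that by auto
  define N where "N = nat M + 3"
  have z1: "\<Delta> (- int N) = 0"
  proof -
    have "\<forall>p\<in>S. shift (- int N) w' p = shift (- int N) w p"
    proof
      fix p assume "p \<in> S"
      then have "fst p - int N \<noteq> 2" using Mb[of p] unfolding N_def by auto
      then show "shift (- int N) w' p = shift (- int N) w p" unfolding shift_def w'_def by auto
    qed
    then show ?thesis using dep unfolding depends_only_on_def \<Delta>_def by auto
  qed
  have z2: "\<Delta> (2 + int N) = 0"
  proof -
    have "\<forall>p\<in>S. shift (2 + int N) w' p = shift (2 + int N) w p"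
    proof
      fix p assume "p \<in> S"
      then have "fst p + (2 + int N) \<noteq> 2" using Mb[of p] unfolding N_def by auto
      then show "shift (2 + int N) w' p = shift (2 + int N) w p" unfolding shift_def w'_def by auto
    qed
    then show ?thesis using dep unfolding depends_only_on_def \<Delta>_def by auto
  qed
  have D0: "\<Delta> 0 = 0" using dn[of N] z1 by simp
  have D2: "\<Delta> 2 = 0" using up[of N] z2 by simp
  have s0: "\<Delta> 1 - \<Delta> 0 = L w' - L w" using step[of 0] by (simp add: shift0)
  have s1: "\<Delta> 2 - \<Delta> 1 = L (shift 1 w') - L (shift 1 w)" using step[of 1] by simp
  have A1: "L w' - L w = deriv (\<lambda>s. q (w(1,0)) (w(0,-1)) s) (w(1,-1)) * f (w(2,1)) (w(1,0)) (w(2,0)) / q (w(1,0)) (w(0,-1)) (w(1,-1))"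
    unfolding L_def w'_def Dx_upd21 by (simp add: shiftf_def add_divide_distrib)
  have sw: "shift 1 w' = (shift 1 w)((1,-2) := shift 1 w (1,-2) + 1)"
    unfolding shift_def w'_def by (auto simp: fun_eq_iff)
  have A2: "L (shift 1 w') - L (shift 1 w) = deriv (\<lambda>s. q (w(2,1)) (w(1,0)) s) (w(2,0)) * h (w(1,0)) (w(0,-1)) (w(1,-1)) / q (w(2,1)) (w(1,0)) (w(2,0))"
    unfolding L_def sw Dx_upd12 by (simp add: shiftf_def shift_def add_divide_distrib)
  show ?thesis using D0 D2 s0 s1 A1 A2 by linarith
qed


lemma pderiv:
  fixes f :: "real \<Rightarrow> real \<Rightarrow> real \<Rightarrow> real"
  assumes "open A" "open B" "(\<lambda>(x,y,z). f x y z) differentiable_on (A\<times>A\<times>B)" "x\<in>A" "y\<in>A" "z\<in>B"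
  shows "((\<lambda>t. f x y t) has_real_derivative deriv (\<lambda>t. f x y t) z) (at z)"
proof -
  have o: "open (A\<times>A\<times>B)" using assms by (simp add: open_Times)
  have d1: "(\<lambda>(x,y,z). f x y z) differentiable (at (x,y,z))"
    using assms o differentiable_on_eq_differentiable_at by blast
  have d2: "(\<lambda>t::real. (x,y,t)) differentiable (at z)" by simp
  have "((\<lambda>(x,y,z). f x y z) \<circ> (\<lambda>t::real. (x,y,t))) differentiable (at z)"
    using differentiable_chain_at[OF d2] d1 by blast
  then have "(\<lambda>t. f x y t) differentiable (at z)" by (simp add: o_def)
  then show ?thesis using DERIV_deriv_iff_real_differentiable by blast
qed

lemma integ:
  fixes g :: "real \<Rightarrow> real"
  assumes "open B" "connected B" "\<forall>z\<in>B. (g has_real_derivative k) (at z)" "b0 \<in> B" "z \<in> B"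
  shows "g z = g b0 + k * (z - b0)"
proof -
  have der: "\<forall>z\<in>B - {}. ((\<lambda>z. g z - k * z) has_real_derivative 0) (at z)"
  proof
    fix z assume "z \<in> B - {}"
    then have "(g has_real_derivative k) (at z)" using assms by auto
    then have "((\<lambda>z. g z - k * z) has_real_derivative (k - k*1)) (at z)"
      by (intro derivative_intros) auto
    then show "((\<lambda>z. g z - k * z) has_real_derivative 0) (at z)" by simp
  qed
  have cont: "continuous_on B (\<lambda>z. g z - k * z)"
    using der by (intro continuous_at_imp_continuous_on) (auto intro: DERIV_continuous)
  obtain c where "\<And>x. x \<in> B \<Longrightarrow> g x - k * x = c"
    using DERIV_zero_connected_constant[OF assms(2,1) finite.emptyI cont der] by blast
  then have "g z - k*z = g b0 - k * b0" using assms by metis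
  then show ?thesis by (simp add: algebra_simps)
qed

lemma witness:
  assumes "x\<in>A" "y\<in>A" "X\<in>A" "z\<in>B" "Z\<in>B"
  obtains w where "w \<in> Omega A B" "w(1,0) = x" "w(0,-1) = y" "w(2,1) = X" "w(1,-1) = z" "w(2,0) = Z"
proof -
  define w :: assignment where "w = (\<lambda>(m,n). if (m,n)=(1,0) then x else if (m,n)=(0,-1) then y
     else if (m,n) = (2,1) then X else if (m,n)=(1,-1) then z else if (m,n)=(2,0) then Z
     else if m = n+1 then x else if m = n+2 then z else 0)"
  have "w \<in> Omega A B" unfolding Omega_def w_def using assms by auto
  then show ?thesis using that unfolding w_def by auto
qed

lemma alg1: fixes a b c p r :: real
  assumes "a\<noteq>0" "b\<noteq>0" "c\<noteq>0" "p*b/a + r*c/b = 0" shows "p/(a*c) = -(r/b^2)"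
  using assms by (simp add: field_simps power2_eq_square)

lemma alg2: fixes b c d p r :: real
  assumes "c\<noteq>0" "b\<noteq>0" "d\<noteq>0" "p*b/c + r*c/d = 0" shows "p/c^2 = -(r/(d*b))"
  using assms by (simp add: field_simps power2_eq_square)



lemma alg3: fixes p q w :: real assumes "p \<noteq> 0" "q \<noteq> 0"
  shows "- p * (inverse p / w) / q = - inverse q / w"
  using assms by (simp add: divide_inverse)

lemma alg4: fixes p q w :: real assumes "p \<noteq> 0" "q \<noteq> 0"
  shows "- p * (- inverse p / w) / q = inverse q / w"
  using assms by (simp add: divide_inverse)

theorem mainTheorem3:
  fixes f h :: "real \<Rightarrow> real \<Rightarrow> real \<Rightarrow> real" and A B :: "real set"
  assumes "open A" and "open B" and "connected B"
    and "(\<lambda>(x, y, z). f x y z) differentiable_on (A \<times> A \<times> B)"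
    and "(\<lambda>(x, y, z). h x y z) differentiable_on (A \<times> A \<times> B)"
    and "\<forall>x\<in>A. \<forall>y\<in>A. \<forall>z\<in>B. f x y z \<noteq> 0 \<and> h x y z \<noteq> 0"
    and "log_deriv_in_Im f h A B f"
    and "log_deriv_in_Im f h A B h"
  shows "(\<exists>a :: real \<Rightarrow> real. \<exists>b :: real \<Rightarrow> real \<Rightarrow> real.
            \<forall>x\<in>A. \<forall>y\<in>A. \<forall>z\<in>B.
              f x y z = a y / (z + b x y) \<and> h x y z = - a x / (z + b x y))
       \<or> (\<exists>F H :: real \<Rightarrow> real \<Rightarrow> real.
            \<forall>x\<in>A. \<forall>y\<in>A. \<forall>z\<in>B. f x y z = F x y \<and> h x y z = H x y)"
proof (cases "A = {} \<or> B = {}")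
  case True then show ?thesis by auto
next
  case False
  then obtain a0 b0 where a0: "a0 \<in> A" and b0: "b0 \<in> B" by blast
  note nz = assms(6)
  have nzf: "f x y z \<noteq> 0" and nzh: "h x y z \<noteq> 0" if "x\<in>A" "y\<in>A" "z\<in>B" for x y z
    using nz that by auto
  define fz where "fz x y z = deriv (\<lambda>t. f x y t) z" for x y z
  define hz where "hz x y z = deriv (\<lambda>t. h x y t) z" for x y z
  have fder: "((\<lambda>t. f x y t) has_real_derivative fz x y z) (at z)" if "x\<in>A" "y\<in>A" "z\<in>B" for x y z
    unfolding fz_def using pderiv[OF assms(1,2,4) that] .
  have hder: "((\<lambda>t. h x y t) has_real_derivative hz x y z) (at z)" if "x\<in>A" "y\<in>A" "z\<in>B" for x y z
    unfolding hz_def using pderiv[OF assms(1,2,5) that] .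
  have Rf: "fz x y z/(f x y z * h x y z) = -(fz X x Z/(f X x Z)^2)"
    if H: "x\<in>A" "y\<in>A" "X\<in>A" "z\<in>B" "Z\<in>B" for x y X z Z
  proof -
    obtain w where w: "w \<in> Omega A B" "w(1,0) = x" "w(0,-1) = y" "w(2,1) = X" "w(1,-1) = z" "w(2,0) = Z"
      using witness[OF H] by blast
    have k: "fz x y z * f X x Z / f x y z + fz X x Z * h x y z / f X x Z = 0"
      using key_rel[OF assms(7) w(1)] by (simp only: w fz_def)
    show ?thesis by (rule alg1[OF _ _ _ k]) (use nzf nzh H in auto)
  qed
  have Rh: "hz x y z/(h x y z)^2 = -(hz X x Z/(h X x Z * f X x Z))"
    if H: "x\<in>A" "y\<in>A" "X\<in>A" "z\<in>B" "Z\<in>B" for x y X z Z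
  proof -
    obtain w where w: "w \<in> Omega A B" "w(1,0) = x" "w(0,-1) = y" "w(2,1) = X" "w(1,-1) = z" "w(2,0) = Z"
      using witness[OF H] by blast
    have k: "hz x y z * f X x Z / h x y z + hz X x Z * h x y z / h X x Z = 0"
      using key_rel[OF assms(8) w(1)] by (simp only: w hz_def)
    show ?thesis by (rule alg2[OF _ _ _ k]) (use nzf nzh H in auto)
  qed
  define \<phi> where "\<phi> x = fz x a0 b0/(f x a0 b0 * h x a0 b0)" for x
  define \<psi> where "\<psi> x = hz x a0 b0/(h x a0 b0)^2" for x
  have p1: "fz x y z/(f x y z * h x y z) = \<phi> x" if "x\<in>A" "y\<in>A" "z\<in>B" for x y z
    using Rf[OF that(1,2) a0 that(3) b0] Rf[OF that(1) a0 a0 b0 b0] unfolding \<phi>_def by simp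
  have p2: "fz x y z/(f x y z)^2 = - \<phi> y" if "x\<in>A" "y\<in>A" "z\<in>B" for x y z
    using Rf[OF that(2) a0 that(1) b0 that(3)] unfolding \<phi>_def by simp
  have q1: "hz x y z/(h x y z)^2 = \<psi> x" if "x\<in>A" "y\<in>A" "z\<in>B" for x y z
    using Rh[OF that(1,2) a0 that(3) b0] Rh[OF that(1) a0 a0 b0 b0] unfolding \<psi>_def by simp
  have q2: "hz x y z/(h x y z * f x y z) = - \<psi> y" if "x\<in>A" "y\<in>A" "z\<in>B" for x y z
    using Rh[OF that(2) a0 that(1) b0 that(3)] unfolding \<psi>_def by simp
  have fz1: "fz x y z = \<phi> x * f x y z * h x y z" and fz2: "fz x y z = - \<phi> y * (f x y z)^2"
    and hz1: "hz x y z = \<psi> x * (h x y z)^2" and hz2: "hz x y z = - \<psi> y * h x y z * f x y z"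
    if "x\<in>A" "y\<in>A" "z\<in>B" for x y z
  proof -
    have n1: "f x y z \<noteq> 0" "h x y z \<noteq> 0" using nzf[OF that] nzh[OF that] by auto
    show "fz x y z = \<phi> x * f x y z * h x y z" using p1[OF that] n1 by (simp add: divide_eq_eq)
    show "fz x y z = - \<phi> y * (f x y z)^2" using p2[OF that] n1 by (simp add: divide_eq_eq)
    show "hz x y z = \<psi> x * (h x y z)^2" using q1[OF that] n1 by (simp add: divide_eq_eq)
    show "hz x y z = - \<psi> y * h x y z * f x y z" using q2[OF that] n1 by (simp add: divide_eq_eq)
  qed
  have r1: "\<phi> x * h x y z = - \<phi> y * f x y z" if "x\<in>A" "y\<in>A" "z\<in>B" for x y z
  proof -
    have "\<phi> x * f x y z * h x y z = - \<phi> y * (f x y z)^2" using fz1[OF that] fz2[OF that] by simp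
    then have "f x y z * (\<phi> x * h x y z) = f x y z * (- \<phi> y * f x y z)"
      by (simp add: power2_eq_square algebra_simps)
    then show ?thesis by (rule mult_left_cancel[THEN iffD1, OF nzf[OF that]])
  qed
  have r2: "\<psi> x * h x y z = - \<psi> y * f x y z" if "x\<in>A" "y\<in>A" "z\<in>B" for x y z
  proof -
    have "\<psi> x * (h x y z)^2 = - \<psi> y * h x y z * f x y z" using hz1[OF that] hz2[OF that] by simp
    then have "h x y z * (\<psi> x * h x y z) = h x y z * (- \<psi> y * f x y z)"
      by (simp add: power2_eq_square algebra_simps)
    then show ?thesis by (rule mult_left_cancel[THEN iffD1, OF nzh[OF that]])
  qed
  show ?thesis
  proof (cases "\<exists>y\<in>A. \<phi> y \<noteq> 0")
    case True
    then obtain y1 where y1: "y1\<in>A" "\<phi> y1 \<noteq> 0" by blast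
    have phinz: "\<phi> x \<noteq> 0" if "x\<in>A" for x
      using r1[OF that y1(1) b0] y1 nzf nzh that b0 by auto
    have inv: "inverse (f x y z) = inverse (f x y b0) + \<phi> y * (z - b0)" if "x\<in>A" "y\<in>A" "z\<in>B" for x y z
    proof (rule integ[OF assms(2,3) _ b0 that(3)], intro ballI)
      fix t assume t: "t\<in>B"
      have "((\<lambda>t. inverse (f x y t)) has_real_derivative - (fz x y t * inverse (f x y t ^ Suc (Suc 0)))) (at t)"
        using DERIV_inverse_fun[OF fder[OF that(1,2) t]] nzf nzh that t by auto
      moreover have "- (fz x y t * inverse (f x y t ^ Suc (Suc 0))) = \<phi> y"
        using fz2[OF that(1,2) t] nzf nzh that t by (simp add: field_simps power2_eq_square)
      ultimately show "((\<lambda>t. inverse (f x y t)) has_real_derivative \<phi> y) (at t)" by simp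
    qed
    define a where "a y = inverse (\<phi> y)" for y
    define b where "b x y = (inverse (f x y b0) - \<phi> y * b0) / \<phi> y" for x y
    have "\<forall>x\<in>A. \<forall>y\<in>A. \<forall>z\<in>B. f x y z = a y / (z + b x y) \<and> h x y z = - a x / (z + b x y)"
    proof (intro ballI)
      fix x y z assume xyz: "x\<in>A" "y\<in>A" "z\<in>B"
      have I: "inverse (f x y z) = \<phi> y * (z + b x y)"
      proof -
        have "\<phi> y * (z + b x y) = \<phi> y * z + (inverse (f x y b0) - \<phi> y * b0)"
          unfolding b_def using phinz[OF xyz(2)] by (simp add: distrib_left)
        then show ?thesis using inv[OF xyz] by (simp add: algebra_simps)
      qed
      have F: "f x y z = a y / (z + b x y)"
      proof -
        have "f x y z = inverse (inverse (f x y z))" by simp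
        also have "\<dots> = a y / (z + b x y)" unfolding I a_def by (simp add: divide_inverse inverse_mult_distrib)
        finally show ?thesis .
      qed
      have "h x y z = - \<phi> y * f x y z / \<phi> x" using r1[OF xyz] phinz[OF xyz(1)] by (simp add: field_simps)
      also have "\<dots> = - a x / (z + b x y)" unfolding F a_def using phinz[OF xyz(1)] phinz[OF xyz(2)]
        by (simp add: divide_inverse inverse_mult_distrib ac_simps)
      finally show "f x y z = a y / (z + b x y) \<and> h x y z = - a x / (z + b x y)" using F by simp
    qed
    then show ?thesis by blast
  next
    case phi0: False
    show ?thesis
    proof (cases "\<exists>y\<in>A. \<psi> y \<noteq> 0")
      case True
      then obtain y1 where y1: "y1\<in>A" "\<psi> y1 \<noteq> 0" by blast
      have psinz: "\<psi> x \<noteq> 0" if "x\<in>A" for x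
        using r2[OF y1(1) that b0] y1 nzf nzh that b0 by auto
      have inv: "inverse (h x y z) = inverse (h x y b0) + (- \<psi> x) * (z - b0)" if "x\<in>A" "y\<in>A" "z\<in>B" for x y z
      proof (rule integ[OF assms(2,3) _ b0 that(3)], intro ballI)
        fix t assume t: "t\<in>B"
        have "((\<lambda>t. inverse (h x y t)) has_real_derivative - (hz x y t * inverse (h x y t ^ Suc (Suc 0)))) (at t)"
          using DERIV_inverse_fun[OF hder[OF that(1,2) t]] nzf nzh that t by auto
        moreover have "- (hz x y t * inverse (h x y t ^ Suc (Suc 0))) = - \<psi> x"
          using hz1[OF that(1,2) t] nzf nzh that t by (simp add: field_simps power2_eq_square)
        ultimately show "((\<lambda>t. inverse (h x y t)) has_real_derivative - \<psi> x) (at t)" by simp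
      qed
      define a where "a y = inverse (\<psi> y)" for y
      define b where "b x y = - (inverse (h x y b0) + \<psi> x * b0) / \<psi> x" for x y
      have "\<forall>x\<in>A. \<forall>y\<in>A. \<forall>z\<in>B. f x y z = a y / (z + b x y) \<and> h x y z = - a x / (z + b x y)"
      proof (intro ballI)
        fix x y z assume xyz: "x\<in>A" "y\<in>A" "z\<in>B"
        have I: "inverse (h x y z) = - \<psi> x * (z + b x y)"
        proof -
          have "- \<psi> x * (z + b x y) = - \<psi> x * z + (inverse (h x y b0) + \<psi> x * b0)"
            unfolding b_def using psinz[OF xyz(1)] by (simp add: distrib_left)
          then show ?thesis using inv[OF xyz] by (simp add: algebra_simps)
        qed
        have H: "h x y z = - a x / (z + b x y)"
        proof -
          have "h x y z = inverse (inverse (h x y z))" by simp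
          also have "\<dots> = - a x / (z + b x y)" unfolding I a_def by (simp add: divide_inverse inverse_mult_distrib)
          finally show ?thesis .
        qed
        have "f x y z = - \<psi> x * h x y z / \<psi> y" using r2[OF xyz] psinz[OF xyz(2)] by (simp add: field_simps)
        also have "\<dots> = a y / (z + b x y)" unfolding H a_def using psinz[OF xyz(1)] psinz[OF xyz(2)]
          by (simp add: divide_inverse inverse_mult_distrib ac_simps)
        finally show "f x y z = a y / (z + b x y) \<and> h x y z = - a x / (z + b x y)" using H by simp
      qed
      then show ?thesis by blast
    next
      case psi0: False
      have "\<forall>x\<in>A. \<forall>y\<in>A. \<forall>z\<in>B. f x y z = f x y b0 \<and> h x y z = h x y b0"
      proof (intro ballI conjI)
        fix x y z assume xyz: "x\<in>A" "y\<in>A" "z\<in>B"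
        have "f x y z = f x y b0 + 0 * (z - b0)"
        proof (rule integ[OF assms(2,3) _ b0 xyz(3)], intro ballI)
          fix t assume t: "t \<in> B"
          show "((\<lambda>t. f x y t) has_real_derivative 0) (at t)"
            using fder[OF xyz(1,2) t] fz1[OF xyz(1,2) t] phi0 xyz by auto
        qed
        then show "f x y z = f x y b0" by simp
        have "h x y z = h x y b0 + 0 * (z - b0)"
        proof (rule integ[OF assms(2,3) _ b0 xyz(3)], intro ballI)
          fix t assume t: "t \<in> B"
          show "((\<lambda>t. h x y t) has_real_derivative 0) (at t)"
            using hder[OF xyz(1,2) t] hz1[OF xyz(1,2) t] psi0 xyz by auto
        qed
        then show "h x y z = h x y b0" by simp
      qed
      then have "\<exists>F H :: real \<Rightarrow> real \<Rightarrow> real. \<forall>x\<in>A. \<forall>y\<in>A. \<forall>z\<in>B. f x y z = F x y \<and> h x y z = H x y" by (intro exI[of _ "\<lambda>x y. f x y b0"] exI[of _ "\<lambda>x y. h x y b0"]) simp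
      then show ?thesis by blast
    qed
  qed
qed

end
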